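(* Let $n\geq 2$ be finite, let $\mathfrak{A}\in TA_n$ be countable, let $a\in A$ be nonzero and let $X\subseteq A$ satisfy $\prod X=0$ in $\mathfrak A$. Then there exist a permutable set $V$ (one may take $V=S_n$, the set of permutations of $n$) and a homomorphism $h:\mathfrak{A}\to\wp(V)$ such that $h(a)\neq\emptyset$ and $\bigcap_{x\in X}h(x)=\emptyset$.
   Context: $TA_n=\mathbf{Mod}(\Sigma_n)$, where $\Sigma_n$ consists of the Boolean algebra axioms, the equations saying each $s_{ij}$ ($i\neq j<n$) is a Boolean endomorphism, and $t_1(x)=t_2(x)$ for all words $t_1,t_2$ in the $s_{ij}$ whose associated compositions of transpositions $[i,j]$ coincide in $S_n$. A set $V\subseteq{}^nU$ is permutable if $s\circ[i,j]\in V$ whenever $s\in V$, $i\neq j<n$. $\wp(V)=\langle\mathcal P(V);\cap,-,S_{ij}\rangle$ with complement relative to $V$ and $S_{ij}(Y)=\{q\in V:q\circ[i,j]\in Y\}$. *)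

theory Defs
  imports "HOL-Combinatorics.Transposition" "HOL-Library.FuncSet" "HOL-Library.Countable_Set"
begin

(* Boolean algebra axioms for <A; meet, compl>: the (dual) Huntington axiomatisation
   (commutativity, associativity, Huntington's axiom), which axiomatises Boolean algebras. *)
definition boolean_alg :: "'a set \<Rightarrow> ('a \<Rightarrow> 'a \<Rightarrow> 'a) \<Rightarrow> ('a \<Rightarrow> 'a) \<Rightarrow> bool" where
  "boolean_alg A meet compl \<longleftrightarrow>
     A \<noteq> {} \<and>
     (\<forall>x\<in>A. \<forall>y\<in>A. meet x y \<in> A) \<and>
     (\<forall>x\<in>A. compl x \<in> A) \<and>
     (\<forall>x\<in>A. \<forall>y\<in>A. meet x y = meet y x) \<and>
     (\<forall>x\<in>A. \<forall>y\<in>A. \<forall>z\<in>A. meet (meet x y) z = meet x (meet y z)) \<and>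
     (\<forall>x\<in>A. \<forall>y\<in>A. meet (compl (meet (compl x) y)) (compl (meet (compl x) (compl y))) = x)"

definition ba_zero :: "'a set \<Rightarrow> ('a \<Rightarrow> 'a \<Rightarrow> 'a) \<Rightarrow> ('a \<Rightarrow> 'a) \<Rightarrow> 'a" where
  "ba_zero A meet compl = (SOME z. \<exists>x\<in>A. z = meet x (compl x))"

definition ba_le :: "('a \<Rightarrow> 'a \<Rightarrow> 'a) \<Rightarrow> 'a \<Rightarrow> 'a \<Rightarrow> bool" where
  "ba_le meet x y \<longleftrightarrow> meet x y = x"

(* "prod X = 0": the infimum of X in the algebra exists and equals 0, i.e. 0 is the only
   lower bound of X in A (0 is always a lower bound). *)
definition inf_is_zero :: "'a set \<Rightarrow> ('a \<Rightarrow> 'a \<Rightarrow> 'a) \<Rightarrow> ('a \<Rightarrow> 'a) \<Rightarrow> 'a set \<Rightarrow> bool" where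
  "inf_is_zero A meet compl X \<longleftrightarrow>
     (\<forall>b\<in>A. (\<forall>x\<in>X. ba_le meet b x) \<longrightarrow> b = ba_zero A meet compl)"

(* words in the s_ij, encoded as lists of index pairs; the word [(i1,j1),...,(ik,jk)]
   denotes s_{i1 j1}(...(s_{ik jk} x)) *)
definition valid_word :: "nat \<Rightarrow> (nat \<times> nat) list \<Rightarrow> bool" where
  "valid_word n w \<longleftrightarrow> (\<forall>(i,j)\<in>set w. i \<noteq> j \<and> i < n \<and> j < n)"

definition word_app :: "(nat \<Rightarrow> nat \<Rightarrow> 'a \<Rightarrow> 'a) \<Rightarrow> (nat \<times> nat) list \<Rightarrow> 'a \<Rightarrow> 'a" where
  "word_app s w x = foldr (\<lambda>(i,j) y. s i j y) w x"

definition word_perm :: "(nat \<times> nat) list \<Rightarrow> nat \<Rightarrow> nat" where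
  "word_perm w = foldr (\<lambda>(i,j) p. transpose i j \<circ> p) w id"

definition TA :: "nat \<Rightarrow> 'a set \<Rightarrow> ('a \<Rightarrow> 'a \<Rightarrow> 'a) \<Rightarrow> ('a \<Rightarrow> 'a) \<Rightarrow> (nat \<Rightarrow> nat \<Rightarrow> 'a \<Rightarrow> 'a) \<Rightarrow> bool" where
  "TA n A meet compl s \<longleftrightarrow>
     boolean_alg A meet compl \<and>
     (\<forall>i<n. \<forall>j<n. i \<noteq> j \<longrightarrow>
        (\<forall>x\<in>A. s i j x \<in> A) \<and>
        (\<forall>x\<in>A. \<forall>y\<in>A. s i j (meet x y) = meet (s i j x) (s i j y)) \<and>
        (\<forall>x\<in>A. s i j (compl x) = compl (s i j x))) \<and>
     (\<forall>w1 w2. valid_word n w1 \<and> valid_word n w2 \<and> word_perm w1 = word_perm w2 \<longrightarrow>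
        (\<forall>x\<in>A. word_app s w1 x = word_app s w2 x))"

(* V \<subseteq> ^n U, sequences represented as extensional functions on {0..<n} *)
definition permutable :: "nat \<Rightarrow> (nat \<Rightarrow> 'u) set \<Rightarrow> bool" where
  "permutable n V \<longleftrightarrow> (\<forall>q\<in>V. \<forall>i<n. \<forall>j<n. i \<noteq> j \<longrightarrow> q \<circ> transpose i j \<in> V)"

definition hom_to_wp :: "nat \<Rightarrow> 'a set \<Rightarrow> ('a \<Rightarrow> 'a \<Rightarrow> 'a) \<Rightarrow> ('a \<Rightarrow> 'a) \<Rightarrow> (nat \<Rightarrow> nat \<Rightarrow> 'a \<Rightarrow> 'a)
    \<Rightarrow> (nat \<Rightarrow> 'u) set \<Rightarrow> ('a \<Rightarrow> (nat \<Rightarrow> 'u) set) \<Rightarrow> bool" where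
  "hom_to_wp n A meet compl s V h \<longleftrightarrow>
     (\<forall>x\<in>A. h x \<subseteq> V) \<and>
     (\<forall>x\<in>A. \<forall>y\<in>A. h (meet x y) = h x \<inter> h y) \<and>
     (\<forall>x\<in>A. h (compl x) = V - h x) \<and>
     (\<forall>i<n. \<forall>j<n. i \<noteq> j \<longrightarrow>
        (\<forall>x\<in>A. h (s i j x) = {q\<in>V. q \<circ> transpose i j \<in> h x}))"

end

theory Submission
  imports Defs
begin


locale hr = fixes r :: "'a \<Rightarrow> 'a" and m :: "'a \<Rightarrow> 'a \<Rightarrow> 'a" and c :: "'a \<Rightarrow> 'a"
 assumes comm: "m x y = m y x" and assoc: "m (m x y) z = m x (m y z)"
 and hunt: "m (c (m (c x) y)) (c (m (c x) (c y))) = r x"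
 and rm: "r (m x y) = m x y" and rc: "r (c x) = c x" and mr: "m (r x) y = m x y" and cr: "c (r x) = c x"
begin
lemma l2: "c (c x) = r x"
proof -
  have f1: "\<forall>a aa. m aa (r a) = m a aa"
    using comm mr by presburger
  have f2: "\<forall>a aa ab. m (c (m (c a) aa)) (m (c (m (c a) (c aa))) ab) = m a ab"
    by (metis assoc hunt mr)
  have f3: "\<forall>a aa ab. m a (m aa ab) = m aa (m a ab)"
    using f1 by (metis (full_types) assoc)
  have f4: "\<forall>a aa. m a (c (m (c a) (c (c aa)))) = m a (c (m (c a) aa))"
    using f2 f1 by (metis (no_types) hunt)
  have f5: "\<forall>a aa. m (c (m a (c aa))) (c (m (c aa) (c a))) = r aa"
    using f1 by (metis cr hunt)
  have f6: "\<forall>a aa ab. m a (m aa (c (m (c a) (c (c ab))))) = m aa (m a (c (m (c a) ab)))"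
    using f4 f3 by metis
  have f7: "\<forall>a aa. m (c (m a (c aa))) (c (m (c a) (c aa))) = r aa"
    using f5 comm by auto
  have "\<forall>a aa ab. m ab (m aa a) = m aa (m a ab)"
    using f1 by (metis (no_types) assoc rm)
  then have "\<forall>a aa. m a (m (c (m (c a) aa)) (c (m a (c (c aa))))) = m a (c aa)"
    using f7 f6 by (metis rc)
  then have "\<forall>a. m (c a) (c (c a)) = m a (c a)"
    using f5 f1 by (metis (no_types))
  then have "\<forall>a. m (c (m a (c a))) (c (m a (c (c a)))) = c a"
    using f7 by (metis comm rc)
  then have "\<forall>a. c (c a) = r a"
    by (metis (no_types) hunt)
  then show ?thesis
    by blast
qed
lemma l1: "m x (c x) = m y (c y)"
proof -
  have f1: "\<forall>a aa. m (c (m aa a)) (c (m aa (c a))) = c aa"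
    by (metis (full_types) hunt l2 mr rc)
  have f2: "\<forall>a aa. m aa (c (c a)) = m a aa"
    using comm l2 mr by presburger
  then have f3: "\<forall>a aa ab. m a (m aa ab) = m aa (m a ab)"
    by (metis (no_types) assoc)
  have f4: "\<forall>a aa. m (c (m a aa)) (c (m (c a) aa)) = c aa"
    using f2 f1 by (simp add: comm l2 rc)
  have f5: "\<forall>a aa ab. m (c (m ab aa)) (m a (c (m ab (c aa)))) = m a (c ab)"
    using f3 f1 by presburger
  have f6: "\<forall>a aa. m (c (m aa a)) (c (m (c a) aa)) = c aa"
    using f1 by (simp add: comm)
  then have "\<forall>a aa. m a (c (m (c aa) a)) = m aa (c (m (c a) aa))"
    using f5 f2 by (metis (no_types))
  then show ?thesis
    using f6 f4 f3 by (metis (no_types))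
qed
lemma l3: "m x x = r x" by (smt (verit) assoc comm hunt l2 mr rc rm)
lemma l0: "m x (m y (c y)) = m y (c y)" by (metis (full_types) assoc l1 l3 mr)
lemma l4: "m x (c y) = m z (c z) \<Longrightarrow> m x y = r x" by (metis comm cr hunt l1 l2 l3 mr rm)
end

locale bal = fixes A :: "'a set" and meet :: "'a \<Rightarrow> 'a \<Rightarrow> 'a" and compl :: "'a \<Rightarrow> 'a"
  assumes ba: "boolean_alg A meet compl"
begin
lemma ne: "A \<noteq> {}" using ba unfolding boolean_alg_def by blast
lemma mA: "x \<in> A \<Longrightarrow> y \<in> A \<Longrightarrow> meet x y \<in> A" using ba unfolding boolean_alg_def by blast
lemma cA: "x \<in> A \<Longrightarrow> compl x \<in> A" using ba unfolding boolean_alg_def by blast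
lemma comm: "x \<in> A \<Longrightarrow> y \<in> A \<Longrightarrow> meet x y = meet y x" using ba unfolding boolean_alg_def by blast
lemma assoc: "x \<in> A \<Longrightarrow> y \<in> A \<Longrightarrow> z \<in> A \<Longrightarrow> meet (meet x y) z = meet x (meet y z)"
  using ba unfolding boolean_alg_def by blast
lemma hunt: "x \<in> A \<Longrightarrow> y \<in> A \<Longrightarrow> meet (compl (meet (compl x) y)) (compl (meet (compl x) (compl y))) = x"
  using ba unfolding boolean_alg_def by blast

definition a0 where "a0 = (SOME x. x \<in> A)"
lemma a0: "a0 \<in> A" unfolding a0_def using ne by (simp add: some_in_eq)
definition rr where "rr x = (if x \<in> A then x else a0)"
definition mm where "mm x y = meet (rr x) (rr y)"
definition cc where "cc x = compl (rr x)"
lemma rrA: "rr x \<in> A" using a0 by (simp add: rr_def)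
lemma rrid: "x \<in> A \<Longrightarrow> rr x = x" by (simp add: rr_def)

interpretation H: hr rr mm cc
proof
  fix x y z
  show "mm x y = mm y x" unfolding mm_def using comm rrA by blast
  show "mm (mm x y) z = mm x (mm y z)" unfolding mm_def using assoc rrA mA rrid by simp
  show "mm (cc (mm (cc x) y)) (cc (mm (cc x) (cc y))) = rr x" unfolding mm_def cc_def
    using hunt rrA mA rrid cA by simp
  show "rr (mm x y) = mm x y" unfolding mm_def using rrA mA rrid by simp
  show "rr (cc x) = cc x" unfolding cc_def using rrA cA rrid by simp
  show "mm (rr x) y = mm x y" unfolding mm_def using rrA rrid by simp
  show "cc (rr x) = cc x" unfolding cc_def using rrA rrid by simp
qed

lemma mm: "x \<in> A \<Longrightarrow> y \<in> A \<Longrightarrow> meet x y = mm x y" by (simp add: mm_def rrid)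
lemma mmA: "mm x y \<in> A" by (simp add: mm_def rrA mA)
lemma ccA: "cc x \<in> A" by (simp add: cc_def rrA cA)
lemma ccc: "x \<in> A \<Longrightarrow> compl x = cc x" by (simp add: cc_def rrid)

abbreviation z where "z \<equiv> ba_zero A meet compl"

lemma zero_eq: "x \<in> A \<Longrightarrow> meet x (compl x) = z"
proof -
  assume x: "x \<in> A"
  have "\<forall>y\<in>A. meet y (compl y) = meet x (compl x)"
    using x by (simp add: mm ccc ccA H.l1)
  hence "z = meet x (compl x)" unfolding ba_zero_def
    by (smt (verit, best) someI_ex x)
  thus ?thesis by simp
qed
lemma zA: "z \<in> A" using zero_eq[OF a0] mA cA a0 by metis
lemma idem: "x \<in> A \<Longrightarrow> meet x x = x" using H.l3 mm rrid by metis
lemma cc_inv: "x \<in> A \<Longrightarrow> compl (compl x) = x" using H.l2 ccc cA rrid by metis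
lemma meet_z: "x \<in> A \<Longrightarrow> meet x z = z"
  using H.l0[of x a0] mm ccc cA a0 zero_eq mA by metis
lemma key: "x \<in> A \<Longrightarrow> y \<in> A \<Longrightarrow> meet x (compl y) = z \<Longrightarrow> meet x y = x"
proof -
  assume x: "x \<in> A" and y: "y \<in> A" and h: "meet x (compl y) = z"
  have "mm x (cc y) = mm a0 (cc a0)" using h zero_eq[OF a0] mm ccc cA x y a0 by metis
  hence "mm x y = rr x" by (rule H.l4)
  thus ?thesis using mm x y rrid by metis
qed
end


locale tal = fixes n :: nat and A :: "'a set" and meet :: "'a \<Rightarrow> 'a \<Rightarrow> 'a" and compl :: "'a \<Rightarrow> 'a"
    and s :: "nat \<Rightarrow> nat \<Rightarrow> 'a \<Rightarrow> 'a"
  assumes ta: "TA n A meet compl s"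
begin
sublocale bal A meet compl using ta unfolding TA_def by unfold_locales blast

lemma sA: "i < n \<Longrightarrow> j < n \<Longrightarrow> i \<noteq> j \<Longrightarrow> x \<in> A \<Longrightarrow> s i j x \<in> A"
  using ta unfolding TA_def by blast
lemma smeet: "i < n \<Longrightarrow> j < n \<Longrightarrow> i \<noteq> j \<Longrightarrow> x \<in> A \<Longrightarrow> y \<in> A \<Longrightarrow> s i j (meet x y) = meet (s i j x) (s i j y)"
  using ta unfolding TA_def by blast
lemma scompl: "i < n \<Longrightarrow> j < n \<Longrightarrow> i \<noteq> j \<Longrightarrow> x \<in> A \<Longrightarrow> s i j (compl x) = compl (s i j x)"
  using ta unfolding TA_def by blast
lemma W_eq: "valid_word n w1 \<Longrightarrow> valid_word n w2 \<Longrightarrow> word_perm w1 = word_perm w2 \<Longrightarrow> x \<in> A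
   \<Longrightarrow> word_app s w1 x = word_app s w2 x"
  using ta unfolding TA_def by blast

lemma valid_Nil[simp]: "valid_word n []" by (simp add: valid_word_def)
lemma valid_Cons[simp]: "valid_word n ((i,j)#w) \<longleftrightarrow> i \<noteq> j \<and> i < n \<and> j < n \<and> valid_word n w"
  by (auto simp: valid_word_def)
lemma valid_append[simp]: "valid_word n (w1 @ w2) \<longleftrightarrow> valid_word n w1 \<and> valid_word n w2"
  by (auto simp: valid_word_def)
lemma valid_rev[simp]: "valid_word n (rev w) \<longleftrightarrow> valid_word n w"
  by (auto simp: valid_word_def)

lemma W_Nil[simp]: "word_app s [] x = x" by (simp add: word_app_def)
lemma W_Cons[simp]: "word_app s ((i,j)#w) x = s i j (word_app s w x)" by (simp add: word_app_def)
lemma W_append: "word_app s (w1 @ w2) x = word_app s w1 (word_app s w2 x)" by (simp add: word_app_def)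

lemma W_A: "valid_word n w \<Longrightarrow> x \<in> A \<Longrightarrow> word_app s w x \<in> A"
proof (induction w)
  case (Cons p w) then show ?case by (cases p) (simp add: sA)
qed simp
lemma W_meet: "valid_word n w \<Longrightarrow> x \<in> A \<Longrightarrow> y \<in> A \<Longrightarrow> word_app s w (meet x y) = meet (word_app s w x) (word_app s w y)"
proof (induction w)
  case (Cons p w) then show ?case by (cases p) (simp add: smeet W_A)
qed simp
lemma W_compl: "valid_word n w \<Longrightarrow> x \<in> A \<Longrightarrow> word_app s w (compl x) = compl (word_app s w x)"
proof (induction w)
  case (Cons p w) then show ?case by (cases p) (simp add: scompl W_A)
qed simp

lemma WP_Nil[simp]: "word_perm [] = id" by (simp add: word_perm_def)
lemma WP_Cons[simp]: "word_perm ((i,j)#w) = transpose i j \<circ> word_perm w" by (simp add: word_perm_def)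
lemma WP_append: "word_perm (w1 @ w2) = word_perm w1 \<circ> word_perm w2"
proof (induction w1)
  case (Cons p w) then show ?case by (cases p) (simp add: comp_assoc)
qed simp
lemma WP_rev: "word_perm (rev w) \<circ> word_perm w = id"
proof (induction w)
  case (Cons p w)
  obtain i j where p: "p = (i,j)" by (cases p)
  have "word_perm (rev (p # w)) \<circ> word_perm (p # w)
      = word_perm (rev w) \<circ> (transpose i j \<circ> transpose i j) \<circ> word_perm w"
    by (simp add: p WP_append fun_eq_iff)
  also have "\<dots> = id" by (simp only: transpose_comp_involutory comp_id Cons.IH)
  finally show ?case .
qed simp
lemma W_inv: "valid_word n w \<Longrightarrow> x \<in> A \<Longrightarrow> word_app s (rev w) (word_app s w x) = x"
proof -
  assume v: "valid_word n w" and x: "x \<in> A"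
  have "word_app s (rev w @ w) x = word_app s [] x"
    by (rule W_eq) (use v x WP_rev WP_append in auto)
  thus ?thesis by (simp add: W_append)
qed
lemma W_inv2: "valid_word n w \<Longrightarrow> x \<in> A \<Longrightarrow> word_app s w (word_app s (rev w) x) = x"
  using W_inv[of "rev w" x] by simp
lemma WP_fix: "valid_word n w \<Longrightarrow> n \<le> k \<Longrightarrow> word_perm w k = k"
proof (induction w)
  case (Cons p w) then show ?case by (cases p) auto
qed simp
lemma WP_lt: "valid_word n w \<Longrightarrow> k < n \<Longrightarrow> word_perm w k < n"
proof (induction w)
  case (Cons p w) then show ?case by (cases p) (auto simp: transpose_def)
qed simp
lemma W_z: "valid_word n w \<Longrightarrow> word_app s w z = z"
  using zero_eq[OF a0] W_meet W_compl W_A a0 cA zero_eq by metis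
end


context bal begin
lemma le_trans: "x \<in> A \<Longrightarrow> y \<in> A \<Longrightarrow> w \<in> A \<Longrightarrow> meet x y = x \<Longrightarrow> meet y w = y \<Longrightarrow> meet x w = x"
proof -
  assume x: "x \<in> A" and y: "y \<in> A" and w: "w \<in> A" and h1: "meet x y = x" and h2: "meet y w = y"
  have "meet x w = meet (meet x y) w" using h1 by simp
  also have "\<dots> = meet x (meet y w)" using assoc x y w by blast
  also have "\<dots> = x" using h1 h2 by simp
  finally show ?thesis .
qed
lemma meet_le2: "x \<in> A \<Longrightarrow> y \<in> A \<Longrightarrow> meet (meet x y) y = meet x y"
proof -
  assume x: "x \<in> A" and y: "y \<in> A"
  have "meet (meet x y) y = meet x (meet y y)" using assoc x y by blast
  thus ?thesis using idem y by simp
qed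
lemma meet_le1: "x \<in> A \<Longrightarrow> y \<in> A \<Longrightarrow> meet (meet x y) x = meet x y"
proof -
  assume x: "x \<in> A" and y: "y \<in> A"
  have "meet (meet x y) x = meet (meet y x) x" using comm x y by simp
  also have "\<dots> = meet y x" using meet_le2 x y by blast
  finally show ?thesis using comm x y by simp
qed
lemma le_meetI: "c \<in> A \<Longrightarrow> x \<in> A \<Longrightarrow> y \<in> A \<Longrightarrow> meet c x = c \<Longrightarrow> meet c y = c \<Longrightarrow> meet c (meet x y) = c"
proof -
  assume c: "c \<in> A" and x: "x \<in> A" and y: "y \<in> A" and h1: "meet c x = c" and h2: "meet c y = c"
  have "meet c (meet x y) = meet (meet c x) y" using assoc c x y by simp
  thus ?thesis using h1 h2 by simp
qed

lemma ult:
  assumes cnt: "countable A" and cA': "c \<in> A" and cz: "c \<noteq> z"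
  shows "\<exists>f. (\<forall>x\<in>A. \<forall>y\<in>A. f (meet x y) = (f x \<and> f y)) \<and> (\<forall>x\<in>A. f (compl x) = (\<not> f x)) \<and> f c"
proof -
  define b where "b = from_nat_into A"
  have bA: "b k \<in> A" for k unfolding b_def using ne by (rule from_nat_into)
  define ch where "ch = rec_nat c (\<lambda>k d. if meet d (b k) \<noteq> z then meet d (b k) else meet d (compl (b k)))"
  have ch0: "ch 0 = c" by (simp add: ch_def)
  have chS: "ch (Suc k) = (if meet (ch k) (b k) \<noteq> z then meet (ch k) (b k) else meet (ch k) (compl (b k)))" for k
    by (simp add: ch_def)
  have inv: "ch k \<in> A \<and> ch k \<noteq> z" for k
  proof (induction k)
    case 0 then show ?case using ch0 cA' cz by simp
  next
    case (Suc k)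
    show ?case
    proof (cases "meet (ch k) (b k) \<noteq> z")
      case True then show ?thesis using Suc bA mA chS by simp
    next
      case False
      have "meet (ch k) (compl (b k)) \<noteq> z"
      proof
        assume "meet (ch k) (compl (b k)) = z"
        hence "meet (ch k) (b k) = ch k" using key[of "ch k" "b k"] Suc.IH bA by blast
        thus False using False Suc by simp
      qed
      then show ?thesis using False Suc bA mA cA chS by simp
    qed
  qed
  have chA: "ch k \<in> A" for k using inv by blast
  have dec: "meet (ch (Suc k)) (ch k) = ch (Suc k)" for k
  proof (cases "meet (ch k) (b k) \<noteq> z")
    case True thus ?thesis using chS[of k] meet_le1[OF chA bA] by simp
  next
    case False thus ?thesis using chS[of k] meet_le1[OF chA cA[OF bA]] by simp
  qed
  have decr: "m \<le> k \<Longrightarrow> meet (ch k) (ch m) = ch k" for m k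
  proof (induction k rule: dec_induct)
    case base then show ?case using idem chA by blast
  next
    case (step k) thus ?case using le_trans[OF chA[of "Suc k"] chA[of k] chA[of m] dec[of k]] by blast
  qed
  define f where "f x = (\<exists>k. meet (ch k) x = ch k)" for x
  have mono: "f x" if fy: "f y" and yA: "y \<in> A" and xA: "x \<in> A" and yx: "meet y x = y" for x y
  proof -
    obtain k where hk: "meet (ch k) y = ch k" using fy unfolding f_def by blast
    show ?thesis unfolding f_def using le_trans[OF chA yA xA hk yx] by blast
  qed
  have fmeet: "f (meet x y) = (f x \<and> f y)" if x: "x \<in> A" and y: "y \<in> A" for x y
  proof
    assume "f (meet x y)"
    note fm = this
    have mxy: "meet x y \<in> A" using mA x y by blast
    show "f x \<and> f y" using mono[OF fm mxy x meet_le1[OF x y]] mono[OF fm mxy y meet_le2[OF x y]] by blast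
  next
    assume "f x \<and> f y"
    then obtain k1 k2 where k1: "meet (ch k1) x = ch k1" and k2: "meet (ch k2) y = ch k2"
      unfolding f_def by blast
    let ?K = "max k1 k2"
    have d1: "meet (ch ?K) (ch k1) = ch ?K" by (rule decr) simp
    have d2: "meet (ch ?K) (ch k2) = ch ?K" by (rule decr) simp
    have e1: "meet (ch ?K) x = ch ?K" by (rule le_trans[OF chA chA x d1 k1])
    have e2: "meet (ch ?K) y = ch ?K" by (rule le_trans[OF chA chA y d2 k2])
    have "meet (ch ?K) (meet x y) = ch ?K" using le_meetI[OF chA[of "max k1 k2"] x y e1 e2] .
    thus "f (meet x y)" unfolding f_def by blast
  qed
  have fcompl: "f (compl x) = (\<not> f x)" if x: "x \<in> A" for x
  proof -
    have "\<exists>k. from_nat_into A k = x" by (rule from_nat_into_surj[OF cnt x])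
    then obtain k where "from_nat_into A k = x" by blast
    hence k: "b k = x" by (simp add: b_def)
    have "f x \<or> f (compl x)"
    proof (cases "meet (ch k) (b k) \<noteq> z")
      case True
      hence "ch (Suc k) = meet (ch k) x" using chS[of k] k by simp
      hence "meet (ch (Suc k)) x = ch (Suc k)" using meet_le2[OF chA x] by simp
      thus ?thesis unfolding f_def by blast
    next
      case False
      hence "ch (Suc k) = meet (ch k) (compl x)" using chS[of k] k by simp
      hence "meet (ch (Suc k)) (compl x) = ch (Suc k)" using meet_le2[OF chA cA[OF x]] by simp
      thus ?thesis unfolding f_def by blast
    qed
    moreover have "\<not> (f x \<and> f (compl x))"
    proof
      assume "f x \<and> f (compl x)"
      hence "f (meet x (compl x))" using fmeet[OF x cA[OF x]] by blast
      then obtain k where "meet (ch k) (meet x (compl x)) = ch k" unfolding f_def by blast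
      hence "meet (ch k) z = ch k" using zero_eq[OF x] by simp
      thus False using meet_z[OF chA[of k]] inv[of k] by simp
    qed
    ultimately show ?thesis by blast
  qed
  have "meet (ch 0) (ch 0) = ch 0" using idem[OF chA] .
  hence "f c" unfolding f_def using ch0 by auto
  thus ?thesis using fmeet fcompl by blast
qed
end

context tal begin
lemma shrink:
  assumes XA: "X \<subseteq> A" and inf0: "inf_is_zero A meet compl X"
    and fin: "finite Q" and val: "\<forall>w\<in>Q. valid_word n w" and c: "c \<in> A" "c \<noteq> z"
  shows "\<exists>d\<in>A. d \<noteq> z \<and> meet d c = d \<and> (\<forall>w\<in>Q. \<exists>x\<in>X. meet d (compl (word_app s w x)) = d)"
  using fin val
proof (induction Q rule: finite_induct)
  case empty then show ?case using c idem by blast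
next
  case (insert w F)
  then obtain d where dA: "d \<in> A" and dz: "d \<noteq> z" and dc: "meet d c = d"
    and dF: "\<forall>w\<in>F. \<exists>x\<in>X. meet d (compl (word_app s w x)) = d" by auto
  have vw: "valid_word n w" using insert by simp
  have "\<exists>x\<in>X. meet d (compl (word_app s w x)) \<noteq> z"
  proof (rule ccontr)
    assume "\<not> ?thesis"
    note nt = this
    have H: "\<forall>x\<in>X. meet d (word_app s w x) = d"
    proof
      fix x assume x: "x \<in> X"
      have wxA: "word_app s w x \<in> A" using W_A vw x XA by blast
      show "meet d (word_app s w x) = d" using key[OF dA wxA] nt x by blast
    qed
    define e where "e = word_app s (rev w) d"
    have eA: "e \<in> A" unfolding e_def using W_A vw dA by simp
    have "\<forall>x\<in>X. ba_le meet e x"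
    proof
      fix x assume x: "x \<in> X"
      have xA: "x \<in> A" using x XA by blast
      have "word_app s (rev w) (meet d (word_app s w x)) = meet e (word_app s (rev w) (word_app s w x))"
        unfolding e_def by (rule W_meet) (use vw dA W_A[OF vw xA] in auto)
      also have "\<dots> = meet e x" using W_inv[OF vw xA] by simp
      finally have "meet e x = word_app s (rev w) (meet d (word_app s w x))" by simp
      thus "ba_le meet e x" using H x unfolding ba_le_def e_def by simp
    qed
    hence "e = z" using inf0 eA unfolding inf_is_zero_def by blast
    hence "d = word_app s w z" using W_inv2[OF vw dA] unfolding e_def by simp
    thus False using W_z vw dz by simp
  qed
  then obtain x where x: "x \<in> X" and nz: "meet d (compl (word_app s w x)) \<noteq> z" by blast
  define d' where "d' = meet d (compl (word_app s w x))"
  have yA: "compl (word_app s w x) \<in> A" using cA W_A vw x XA by blast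
  have d'A: "d' \<in> A" unfolding d'_def using mA dA yA by blast
  have d'd: "meet d' d = d'" unfolding d'_def using meet_le1 dA yA by blast
  have d'c: "meet d' c = d'" using le_trans[OF d'A dA c(1) d'd dc] .
  have d'Q: "\<forall>w'\<in>insert w F. \<exists>x\<in>X. meet d' (compl (word_app s w' x)) = d'"
  proof
    fix w' assume "w' \<in> insert w F"
    then show "\<exists>x\<in>X. meet d' (compl (word_app s w' x)) = d'"
    proof
      assume "w' = w"
      have "meet d' (compl (word_app s w x)) = d'" unfolding d'_def by (rule meet_le2[OF dA yA])
      thus ?thesis using x \<open>w' = w\<close> by blast
    next
      assume w': "w' \<in> F"
      then obtain x' where x': "x' \<in> X" and h: "meet d (compl (word_app s w' x')) = d" using dF by blast
      have "compl (word_app s w' x') \<in> A" using cA W_A insert.prems w' x' XA by blast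
      hence "meet d' (compl (word_app s w' x')) = d'" by (rule le_trans[OF d'A dA _ d'd h])
      thus ?thesis using x' by blast
    qed
  qed
  have nz': "d' \<noteq> z" using nz d'_def by simp
  show ?case using d'A nz' d'c d'Q by blast
qed
end


lemma restrict_comp_transpose:
  fixes n :: nat and p :: "nat \<Rightarrow> 'c"
  assumes "i < n" "j < n"
  shows "restrict p {0..<n} \<circ> transpose i j = restrict (p \<circ> transpose i j) {0..<n}"
proof
  fix k
  show "(restrict p {0..<n} \<circ> transpose i j) k = restrict (p \<circ> transpose i j) {0..<n} k"
  proof (cases "k < n")
    case True
    hence "transpose i j k < n" using assms by (auto simp: transpose_def)
    thus ?thesis using True by auto
  next
    case False
    hence "transpose i j k = k" using assms by (auto simp: transpose_def)
    thus ?thesis using False by simp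
  qed
qed

context tal begin
lemma restrict_inj:
  assumes "valid_word n w1" "valid_word n w2"
    and "restrict (word_perm w1) {0..<n} = restrict (word_perm w2) {0..<n}"
  shows "word_perm w1 = word_perm w2"
proof
  fix k
  show "word_perm w1 k = word_perm w2 k"
  proof (cases "k < n")
    case True
    thus ?thesis using fun_cong[OF assms(3), of k] by simp
  next
    case False
    thus ?thesis using WP_fix assms(1,2) by simp
  qed
qed
end

theorem theorem3p18:
  fixes n :: nat and A :: "'a set" and meet :: "'a \<Rightarrow> 'a \<Rightarrow> 'a" and compl :: "'a \<Rightarrow> 'a"
    and s :: "nat \<Rightarrow> nat \<Rightarrow> 'a \<Rightarrow> 'a" and a :: 'a and X :: "'a set"
  assumes "n \<ge> 2"
    and "TA n A meet compl s"
    and "countable A"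
    and "a \<in> A" and "a \<noteq> ba_zero A meet compl"
    and "X \<subseteq> A" and "inf_is_zero A meet compl X"
  shows "\<exists>(U::nat set) (V::(nat \<Rightarrow> nat) set) h.
           V \<subseteq> ({0..<n} \<rightarrow>\<^sub>E U) \<and> permutable n V \<and>
           hom_to_wp n A meet compl s V h \<and>
           h a \<noteq> {} \<and> (\<Inter>x\<in>X. h x) = {}"
proof -
  interpret tal n A meet compl s by unfold_locales (rule assms(2))
  note aA = assms(4) and az = assms(5) and XA = assms(6) and inf0 = assms(7)
  define V :: "(nat \<Rightarrow> nat) set" where "V = {restrict (word_perm w) {0..<n} | w. valid_word n w}"
  define wq where "wq q = (SOME w. valid_word n w \<and> restrict (word_perm w) {0..<n} = q)" for q
  have wq: "valid_word n (wq q) \<and> restrict (word_perm (wq q)) {0..<n} = q" if "q \<in> V" for q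
  proof -
    have "\<exists>w. valid_word n w \<and> restrict (word_perm w) {0..<n} = q" using that unfolding V_def by blast
    thus ?thesis unfolding wq_def by (rule someI_ex)
  qed
  have wq_perm: "word_perm (wq (restrict (word_perm w) {0..<n})) = word_perm w" if "valid_word n w" for w
  proof -
    have inV: "restrict (word_perm w) {0..<n} \<in> V" unfolding V_def using that by blast
    show ?thesis using restrict_inj[of "wq (restrict (word_perm w) {0..<n})" w] wq[OF inV] that by blast
  qed
  have VE: "V \<subseteq> {0..<n} \<rightarrow>\<^sub>E {0..<n}"
    unfolding V_def using WP_lt by auto
  have finV: "finite V"
    by (rule finite_subset[OF VE]) (simp add: finite_PiE)
  have Xne: "X \<noteq> {}"
  proof
    assume "X = {}"
    hence "a = z" using inf0 aA unfolding inf_is_zero_def by blast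
    thus False using az by simp
  qed
  obtain d where dA: "d \<in> A" and dz: "d \<noteq> z" and da: "meet d a = d"
    and dQ: "\<forall>w\<in>wq ` V. \<exists>x\<in>X. meet d (compl (word_app s w x)) = d"
    using shrink[OF XA inf0 finite_imageI[OF finV] _ aA az] wq by blast
  obtain f where fmeet: "\<forall>x\<in>A. \<forall>y\<in>A. f (meet x y) = (f x \<and> f y)"
    and fcompl: "\<forall>x\<in>A. f (compl x) = (\<not> f x)" and fd: "f d"
    using ult[OF assms(3) dA dz] by blast
  have fup: "f y" if "y \<in> A" "meet d y = d" for y
    using fmeet dA that fd by metis
  define h where "h x = {q \<in> V. f (word_app s (wq q) x)}" for x
  have perm: "q \<circ> transpose i j \<in> V \<and> word_perm (wq (q \<circ> transpose i j)) = word_perm (wq q @ [(i,j)])"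
    if q: "q \<in> V" and ij: "i < n" "j < n" "i \<noteq> j" for q i j
  proof -
    have v: "valid_word n (wq q @ [(i,j)])" using wq[OF q] ij by simp
    have "q \<circ> transpose i j = restrict (word_perm (wq q) \<circ> transpose i j) {0..<n}"
      using wq[OF q] restrict_comp_transpose[OF ij(1,2)] by metis
    also have "\<dots> = restrict (word_perm (wq q @ [(i,j)])) {0..<n}"
      by (simp add: WP_append)
    finally have e: "q \<circ> transpose i j = restrict (word_perm (wq q @ [(i,j)])) {0..<n}" .
    show ?thesis unfolding e using wq_perm[OF v] v unfolding V_def by blast
  qed
  have hom: "hom_to_wp n A meet compl s V h"
    unfolding hom_to_wp_def
  proof (intro conjI ballI allI impI)
    fix x assume "x \<in> A" thus "h x \<subseteq> V" unfolding h_def by blast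
  next
    fix x y assume x: "x \<in> A" and y: "y \<in> A"
    show "h (meet x y) = h x \<inter> h y" unfolding h_def
      using W_meet[OF _ x y] fmeet W_A[OF _ x] W_A[OF _ y] wq by auto
  next
    fix x assume x: "x \<in> A"
    show "h (compl x) = V - h x" unfolding h_def
      using W_compl[OF _ x] fcompl W_A[OF _ x] wq by auto
  next
    fix i j x assume ij: "i < n" "j < n" "i \<noteq> j" and x: "x \<in> A"
    show "h (s i j x) = {q \<in> V. q \<circ> transpose i j \<in> h x}"
    proof (intro set_eqI iffI)
      fix q assume "q \<in> h (s i j x)"
      hence q: "q \<in> V" and fq: "f (word_app s (wq q) (s i j x))" unfolding h_def by auto
      have "word_app s (wq (q \<circ> transpose i j)) x = word_app s (wq q @ [(i,j)]) x"
        by (rule W_eq) (use perm[OF q ij] wq[OF q] wq ij x in auto)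
      also have "\<dots> = word_app s (wq q) (s i j x)" by (simp add: W_append)
      finally show "q \<in> {q \<in> V. q \<circ> transpose i j \<in> h x}" using q fq perm[OF q ij] unfolding h_def by auto
    next
      fix q assume "q \<in> {q \<in> V. q \<circ> transpose i j \<in> h x}"
      hence q: "q \<in> V" and fq: "f (word_app s (wq (q \<circ> transpose i j)) x)" unfolding h_def by auto
      have "word_app s (wq (q \<circ> transpose i j)) x = word_app s (wq q @ [(i,j)]) x"
        by (rule W_eq) (use perm[OF q ij] wq[OF q] wq ij x in auto)
      also have "\<dots> = word_app s (wq q) (s i j x)" by (simp add: W_append)
      finally show "q \<in> h (s i j x)" using q fq unfolding h_def by auto
    qed
  qed
  have perm': "permutable n V" unfolding permutable_def using perm by blast
  have ha: "h a \<noteq> {}"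
  proof -
    let ?q0 = "restrict (word_perm []) {0..<n}"
    have q0: "?q0 \<in> V" unfolding V_def using valid_Nil by blast
    have "word_app s (wq ?q0) a = word_app s [] a"
      by (rule W_eq) (use wq[OF q0] wq_perm[of "[]"] aA in auto)
    hence "f (word_app s (wq ?q0) a)" using fup[OF aA] da by simp
    thus ?thesis using q0 unfolding h_def by blast
  qed
  have hX: "(\<Inter>x\<in>X. h x) = {}"
  proof (rule ccontr)
    assume "(\<Inter>x\<in>X. h x) \<noteq> {}"
    then obtain q where qI: "\<forall>x\<in>X. q \<in> h x" by blast
    obtain x0 where "x0 \<in> X" using Xne by blast
    hence q: "q \<in> V" using qI unfolding h_def by blast
    then obtain x where x: "x \<in> X" and hx: "meet d (compl (word_app s (wq q) x)) = d" using dQ by blast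
    have wA: "word_app s (wq q) x \<in> A" using W_A wq[OF q] x XA by blast
    have "f (compl (word_app s (wq q) x))" using fup[OF cA[OF wA] hx] .
    hence "\<not> f (word_app s (wq q) x)" using fcompl wA by blast
    thus False using qI x unfolding h_def by blast
  qed
  show ?thesis
    apply (rule exI[of _ UNIV], rule exI[of _ V], rule exI[of _ h])
    using VE perm' hom ha hX by (auto simp: PiE_def Pi_def)
qed

end
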